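(* Let $\alpha$ be a rational with $0<\alpha<1$, let $\mathsf{S}_1,\mathsf{S}_2,\ldots$ be positive rationals, and define $\mathsf{srtt}_1=\mathsf{S}_1$ and $\mathsf{srtt}_j=(1-\alpha)\mathsf{srtt}_{j-1}+\alpha\mathsf{S}_j$ for $j>1$. Let $c,r>0$ be rationals, let $i\ge 2$ and $n\ge 0$ be integers, and suppose $\mathsf{S}_i,\mathsf{S}_{i+1},\ldots,\mathsf{S}_{i+n}\in[c-r,c+r]$. Then $L\le \mathsf{srtt}_{i+n}\le H$, where $L=(1-\alpha)^{n+1}\mathsf{srtt}_{i-1}+\bigl(1-(1-\alpha)^{n+1}\bigr)(c-r)$ and $H=(1-\alpha)^{n+1}\mathsf{srtt}_{i-1}+\bigl(1-(1-\alpha)^{n+1}\bigr)(c+r)$.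
   Context: This models the smoothed round-trip-time estimator of the TCP retransmission timeout computation; $\mathsf{S}_j$ are RTT samples. *)

theory Defs
  imports Main "HOL.Rat"
begin

text \<open>Smoothed RTT estimator, indexed from 1: srtt 1 = S 1,
  srtt j = (1 - alpha) * srtt (j-1) + alpha * S j for j > 1.
  The value at index 0 is unused and fixed to 0 by convention.\<close>
fun srtt :: "rat \<Rightarrow> (nat \<Rightarrow> rat) \<Rightarrow> nat \<Rightarrow> rat" where
  "srtt a S 0 = 0"
| "srtt a S (Suc 0) = S (Suc 0)"
| "srtt a S (Suc (Suc k)) = (1 - a) * srtt a S (Suc k) + a * S (Suc (Suc k))"

end

theory Submission
  imports Defs
begin

lemma srtt_step: "k \<ge> 2 \<Longrightarrow> srtt a S k = (1 - a) * srtt a S (k - 1) + a * S k"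
proof -
  assume "k \<ge> 2"
  then obtain m where "k = Suc (Suc m)" by (metis add_2_eq_Suc le_Suc_ex)
  then show ?thesis by simp
qed

theorem theorem2:
  fixes \<alpha> c r :: rat and S :: "nat \<Rightarrow> rat" and i n :: nat
  assumes "0 < \<alpha>" and "\<alpha> < 1"
    and "\<And>j. j \<ge> 1 \<Longrightarrow> S j > 0"
    and "c > 0" and "r > 0"
    and "i \<ge> 2"
    and "\<And>j. i \<le> j \<Longrightarrow> j \<le> i + n \<Longrightarrow> c - r \<le> S j \<and> S j \<le> c + r"
  shows "(1 - \<alpha>) ^ (n + 1) * srtt \<alpha> S (i - 1) + (1 - (1 - \<alpha>) ^ (n + 1)) * (c - r)
           \<le> srtt \<alpha> S (i + n)
       \<and> srtt \<alpha> S (i + n)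
           \<le> (1 - \<alpha>) ^ (n + 1) * srtt \<alpha> S (i - 1) + (1 - (1 - \<alpha>) ^ (n + 1)) * (c + r)"
  using assms(7)
proof (induction n)
  case 0
  have e: "srtt \<alpha> S i = (1 - \<alpha>) * srtt \<alpha> S (i - 1) + \<alpha> * S i"
    using srtt_step assms(6) by blast
  have "c - r \<le> S i \<and> S i \<le> c + r" using 0 by simp
  then show ?case using e assms(1) by (simp add: mult_left_mono)
next
  case (Suc n)
  let ?s = "srtt \<alpha> S (i - 1)"
  let ?B = "(1 - \<alpha>) ^ (n + 1)"
  have IH: "?B * ?s + (1 - ?B) * (c - r) \<le> srtt \<alpha> S (i + n)
       \<and> srtt \<alpha> S (i + n) \<le> ?B * ?s + (1 - ?B) * (c + r)"
    using Suc by simp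
  have e: "srtt \<alpha> S (i + Suc n) = (1 - \<alpha>) * srtt \<alpha> S (i + n) + \<alpha> * S (i + Suc n)"
    using srtt_step[of "i + Suc n" \<alpha> S] assms(6) by simp
  have b: "c - r \<le> S (i + Suc n) \<and> S (i + Suc n) \<le> c + r" using Suc.prems by simp
  have p: "1 - \<alpha> \<ge> 0" using assms(2) by simp
  have l1: "(1 - \<alpha>) * (?B * ?s + (1 - ?B) * (c - r)) \<le> (1 - \<alpha>) * srtt \<alpha> S (i + n)"
    using IH p mult_left_mono by blast
  have l2: "(1 - \<alpha>) * srtt \<alpha> S (i + n) \<le> (1 - \<alpha>) * (?B * ?s + (1 - ?B) * (c + r))"
    using IH p mult_left_mono by blast
  have m1: "\<alpha> * (c - r) \<le> \<alpha> * S (i + Suc n)" using b assms(1) by simp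
  have m2: "\<alpha> * S (i + Suc n) \<le> \<alpha> * (c + r)" using b assms(1) by simp
  have pw: "(1 - \<alpha>) ^ (Suc n + 1) = (1 - \<alpha>) * ?B" by simp
  show ?case unfolding e pw using l1 l2 m1 m2 by (simp add: algebra_simps)
qed

end
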